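(* Let $d\geqslant2$ be an integer and let $\mu\in L^\infty(\mathbb{C})$ be supported on the unit disk. Then \[ \frac{1}{dz^{d-1}}\Big\{\mathcal C\mu(z^d)-\mathcal C\mu(0)\Big\}=\mathcal C\big((z^d)^*\mu\big)(z),\qquad z\in\mathbb{C}\setminus\{0\}. \]
   Context: $\mathcal C\mu(z)=\frac{1}{\pi}\int_{\mathbb{C}}\frac{\mu(\zeta)}{z-\zeta}\,dm(\zeta)$ is the Cauchy transform. For $f(z)=z^d$, the pullback is $(f^*\mu)(z)=\mu(f(z))\,\overline{f'(z)}/f'(z)$. *)

theory Defs
  imports "HOL-Analysis.Analysis"
begin

text \<open>Cauchy transform with respect to (complete) Lebesgue measure on the plane.
  The integrand's singularity at the single point z is a null set.\<close>
definition cauchy_transform :: "(complex \<Rightarrow> complex) \<Rightarrow> complex \<Rightarrow> complex" where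
  "cauchy_transform \<mu> z = (1 / of_real pi) * (LINT \<zeta>|lebesgue. \<mu> \<zeta> / (z - \<zeta>))"

definition pullback :: "(complex \<Rightarrow> complex) \<Rightarrow> (complex \<Rightarrow> complex) \<Rightarrow> complex \<Rightarrow> complex" where
  "pullback f \<mu> z = \<mu> (f z) * cnj (deriv f z) / deriv f z"

end

theory Submission
  imports Defs
begin

lemma lebesgue_iso:
  fixes T :: "'a::euclidean_space \<Rightarrow> 'b::euclidean_space"
  assumes T[measurable]: "T \<in> borel \<rightarrow>\<^sub>M borel" and eq: "distr lborel borel T = lborel"
  shows "T \<in> lebesgue \<rightarrow>\<^sub>M lebesgue" "distr lebesgue lebesgue T = lebesgue"
proof -
  have T': "T \<in> lborel \<rightarrow>\<^sub>M lborel" using T by simp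
  have d: "distr lebesgue lborel T = lborel"
    using eq T' by (simp add: distr_completion cong: distr_cong)
  then have eqn: "null_sets lborel = null_sets (distr lebesgue lborel T)" by simp
  have Tl: "T \<in> lebesgue \<rightarrow>\<^sub>M lborel"
    using T' measurable_completion by blast
  show "T \<in> lebesgue \<rightarrow>\<^sub>M lebesgue"
    by (rule completion.measurable_completion2[OF Tl]) (simp add: eqn)
  have "lebesgue = completion (distr lebesgue lborel T)" by (simp add: d)
  also have "\<dots> = distr lebesgue lebesgue T"
    by (subst completion.completion_distr_eq[OF Tl]) (simp_all add: d)
  finally show "distr lebesgue lebesgue T = lebesgue" by simp
qed

definition c2v :: "complex \<Rightarrow> real^2" where "c2v z = vector [Re z, Im z]"
definition v2c :: "real^2 \<Rightarrow> complex" where "v2c x = Complex (x$1) (x$2)"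

lemma c2v_nth [simp]: "c2v z $ 1 = Re z" "c2v z $ 2 = Im z"
  by (simp_all add: c2v_def)

lemma v2c_c2v [simp]: "v2c (c2v z) = z" by (simp add: v2c_def complex_eq_iff)
lemma c2v_v2c [simp]: "c2v (v2c x) = x"
  by (simp add: v2c_def vec_eq_iff forall_2)

lemma linear_c2v: "linear c2v"
  by (rule linearI) (simp_all add: vec_eq_iff forall_2)
lemma linear_v2c: "linear v2c"
  by (rule linearI) (simp_all add: v2c_def complex_eq_iff)
lemma bounded_linear_c2v: "bounded_linear c2v"
  using linear_c2v linear_conv_bounded_linear by blast
lemma bounded_linear_v2c: "bounded_linear v2c"
  using linear_v2c linear_conv_bounded_linear by blast

lemma c2v_inj [simp]: "c2v a = c2v b \<longleftrightarrow> a = b"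
  by (metis v2c_c2v)

lemma measurable_v2c [measurable]: "v2c \<in> borel \<rightarrow>\<^sub>M borel"
  using bounded_linear_v2c borel_measurable_continuous_onI linear_continuous_on by blast
lemma measurable_c2v [measurable]: "c2v \<in> borel \<rightarrow>\<^sub>M borel"
  using bounded_linear_c2v borel_measurable_continuous_onI linear_continuous_on by blast

lemma prod_Basis_2: "(\<Prod>b\<in>(Basis::(real^2) set). f b) = f (axis 1 1) * (f (axis 2 1) :: 'a::comm_monoid_mult)"
  by (simp add: Basis_vec_def UNIV_2 prod.reindex inj_on_def axis_eq_axis mult.commute)

lemma lborel_v2c: "distr lborel borel v2c = lborel"
proof (rule lborel_eqI[symmetric])
  fix l u :: complex
  assume le: "\<And>b. b \<in> Basis \<Longrightarrow> l \<bullet> b \<le> u \<bullet> b"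
  have pre: "v2c -` box l u = box (c2v l) (c2v u)"
    by (auto simp: mem_box Basis_complex_def v2c_def Basis_vec_def UNIV_2 inner_axis)
  have "emeasure (distr lborel borel v2c) (box l u) = emeasure lborel (box (c2v l) (c2v u))"
    by (simp add: emeasure_distr pre)
  also have "\<dots> = (\<Prod>b\<in>Basis. (u - l) \<bullet> b)"
  proof -
    have "Re l \<le> Re u" "Im l \<le> Im u" using le[of 1] le[of \<i>] by (auto simp: Basis_complex_def)
    then show ?thesis
      by (simp add: emeasure_lborel_box_eq prod_Basis_2 inner_axis Basis_complex_def
          ennreal_mult' Basis_vec_def UNIV_2 axis_eq_axis mult.commute)
  qed
  finally show "emeasure (distr lborel borel v2c) (box l u) = (\<Prod>b\<in>Basis. (u - l) \<bullet> b)" .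
qed simp

lemma lborel_c2v: "distr lborel borel c2v = lborel"
proof (rule lborel_eqI[symmetric])
  fix l u :: "real^2"
  assume le: "\<And>b. b \<in> Basis \<Longrightarrow> l \<bullet> b \<le> u \<bullet> b"
  have pre: "c2v -` box l u = box (v2c l) (v2c u)"
    by (auto simp: mem_box Basis_complex_def v2c_def Basis_vec_def UNIV_2 inner_axis)
  have "emeasure (distr lborel borel c2v) (box l u) = emeasure lborel (box (v2c l) (v2c u))"
    by (simp add: emeasure_distr pre)
  also have "\<dots> = (\<Prod>b\<in>Basis. (u - l) \<bullet> b)"
  proof -
    have "l$1 \<le> u$1" "l$2 \<le> u$2" using le[of "axis 1 1"] le[of "axis 2 1"]
      by (auto simp: Basis_vec_def inner_axis)
    then show ?thesis
      by (simp add: emeasure_lborel_box_eq prod_Basis_2 inner_axis Basis_complex_def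
          ennreal_mult' v2c_def Basis_vec_def UNIV_2 axis_eq_axis mult.commute)
  qed
  finally show "emeasure (distr lborel borel c2v) (box l u) = (\<Prod>b\<in>Basis. (u - l) \<bullet> b)" .
qed simp

lemma lebesgue_v2c: "v2c \<in> lebesgue \<rightarrow>\<^sub>M lebesgue" "distr lebesgue lebesgue v2c = lebesgue"
  using lebesgue_iso[OF measurable_v2c lborel_v2c] by auto
lemma lebesgue_c2v: "c2v \<in> lebesgue \<rightarrow>\<^sub>M lebesgue" "distr lebesgue lebesgue c2v = lebesgue"
  using lebesgue_iso[OF measurable_c2v lborel_c2v] by auto

lemma integrable_v2c:
  fixes f :: "complex \<Rightarrow> 'c::{banach,second_countable_topology}"
  shows "integrable lebesgue (\<lambda>x. f (v2c x)) \<longleftrightarrow> integrable lebesgue f"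
    and "integral\<^sup>L lebesgue (\<lambda>x. f (v2c x)) = integral\<^sup>L lebesgue f"
proof -
  have meas: "f \<in> borel_measurable lebesgue \<longleftrightarrow> (\<lambda>x. f (v2c x)) \<in> borel_measurable lebesgue"
  proof
    assume "f \<in> borel_measurable lebesgue"
    then show "(\<lambda>x. f (v2c x)) \<in> borel_measurable lebesgue"
      using lebesgue_v2c(1) by (simp add: measurable_compose)
  next
    assume "(\<lambda>x. f (v2c x)) \<in> borel_measurable lebesgue"
    from measurable_compose[OF lebesgue_c2v(1) this] show "f \<in> borel_measurable lebesgue" by simp
  qed
  then have both: "(integrable lebesgue (\<lambda>x. f (v2c x)) \<longleftrightarrow> integrable lebesgue f) \<and>
     integral\<^sup>L lebesgue (\<lambda>x. f (v2c x)) = integral\<^sup>L lebesgue f"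
  proof (cases "f \<in> borel_measurable lebesgue")
    case True
    then show ?thesis
      using integrable_distr_eq[OF lebesgue_v2c(1) True] integral_distr[OF lebesgue_v2c(1) True]
      by (simp add: lebesgue_v2c(2))
  next
    case False
    then have n1: "\<not> integrable lebesgue f" using borel_measurable_integrable by blast
    from False meas have n2: "\<not> integrable lebesgue (\<lambda>x. f (v2c x))"
      using borel_measurable_integrable by blast
    show ?thesis using n1 n2 by (simp add: not_integrable_integral_eq)
  qed
  show i: "integrable lebesgue (\<lambda>x. f (v2c x)) \<longleftrightarrow> integrable lebesgue f"
    using both by blast
  show "integral\<^sup>L lebesgue (\<lambda>x. f (v2c x)) = integral\<^sup>L lebesgue f"
    using both i by (cases "integrable lebesgue f") (auto simp: not_integrable_integral_eq)
qed

lemma c2v_image_iff: "x \<in> c2v ` A \<longleftrightarrow> v2c x \<in> A"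
  by (metis c2v_v2c image_iff v2c_c2v)

lemma indicator_c2v_image: "indicator (c2v ` A) x = indicator A (v2c x)"
  by (simp add: indicator_def c2v_image_iff)

lemma absint_c2v:
  fixes F :: "complex \<Rightarrow> complex"
  shows "(\<lambda>x. c2v (F (v2c x))) absolutely_integrable_on (c2v ` A) \<longleftrightarrow> F absolutely_integrable_on A"
    and "F absolutely_integrable_on A \<Longrightarrow>
         integral (c2v ` A) (\<lambda>x. c2v (F (v2c x))) = c2v (integral A F)"
proof -
  define K where "K y = indicator A y *\<^sub>R F y" for y
  have eq: "(\<lambda>x. indicator (c2v ` A) x *\<^sub>R c2v (F (v2c x))) = (\<lambda>x. c2v (K (v2c x)))"
    by (auto simp: K_def indicator_c2v_image linear_scale[OF linear_c2v] fun_eq_iff)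
  have i1: "integrable lebesgue (\<lambda>x. c2v (K (v2c x))) \<longleftrightarrow> integrable lebesgue (\<lambda>x. K (v2c x))"
  proof
    assume "integrable lebesgue (\<lambda>x. c2v (K (v2c x)))"
    from integrable_bounded_linear[OF bounded_linear_v2c this] show "integrable lebesgue (\<lambda>x. K (v2c x))"
      by simp
  qed (rule integrable_bounded_linear[OF bounded_linear_c2v])
  show iff: "(\<lambda>x. c2v (F (v2c x))) absolutely_integrable_on (c2v ` A) \<longleftrightarrow> F absolutely_integrable_on A"
  proof -
    have "integrable lebesgue (\<lambda>x. K (v2c x)) \<longleftrightarrow> integrable lebesgue K"
      by (rule integrable_v2c(1))
    then show ?thesis unfolding set_integrable_def eq i1 by (simp add: K_def[abs_def])
  qed
  assume F: "F absolutely_integrable_on A"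
  then have F': "(\<lambda>x. c2v (F (v2c x))) absolutely_integrable_on (c2v ` A)" using iff by simp
  have KI: "integrable lebesgue (\<lambda>x. K (v2c x))"
    using F integrable_v2c(1)[of K] by (simp add: set_integrable_def K_def[abs_def])
  have "integral (c2v ` A) (\<lambda>x. c2v (F (v2c x))) = (LINT x:(c2v ` A)|lebesgue. c2v (F (v2c x)))"
    using set_lebesgue_integral_eq_integral(2)[OF F'] by simp
  also have "\<dots> = integral\<^sup>L lebesgue (\<lambda>x. c2v (K (v2c x)))"
    unfolding set_lebesgue_integral_def eq ..
  also have "\<dots> = c2v (integral\<^sup>L lebesgue (\<lambda>x. K (v2c x)))"
    using integral_bounded_linear[OF bounded_linear_c2v KI] by simp
  also have "\<dots> = c2v (LINT x:A|lebesgue. F x)"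
    using integrable_v2c(2)[of K] by (simp add: set_lebesgue_integral_def K_def[abs_def])
  also have "\<dots> = c2v (integral A F)"
    using set_lebesgue_integral_eq_integral(2)[OF F] by simp
  finally show "integral (c2v ` A) (\<lambda>x. c2v (F (v2c x))) = c2v (integral A F)" .
qed

lemma det_c2v_mult:
  "det (matrix (\<lambda>h. c2v (c * v2c h))) = (cmod c)^2"
proof -
  have a1: "v2c (axis 1 1) = 1" by (simp add: v2c_def axis_def complex_eq_iff)
  have a2: "v2c (axis 2 1) = \<i>" by (simp add: v2c_def axis_def complex_eq_iff)
  have e: "(cmod c)^2 = Re c * Re c + Im c * Im c"
    by (metis cmod_power2 power2_eq_square)
  show ?thesis
    by (simp add: det_2 matrix_def a1 a2 e)
qed

lemma cov_complex:
  fixes F :: "complex \<Rightarrow> complex" and G :: "complex \<Rightarrow> complex"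
  assumes S: "S \<in> sets lebesgue"
    and der: "\<And>x. x \<in> S \<Longrightarrow> (G has_field_derivative G' x) (at x within S)"
    and inj: "inj_on G S"
  shows "(\<lambda>x. (cmod (G' x))^2 *\<^sub>R F (G x)) absolutely_integrable_on S \<and>
           integral S (\<lambda>x. (cmod (G' x))^2 *\<^sub>R F (G x)) = b
     \<longleftrightarrow> F absolutely_integrable_on (G ` S) \<and> integral (G ` S) F = b"
proof -
  define S2 where "S2 = c2v ` S"
  define g where "g x = c2v (G (v2c x))" for x
  define g' where "g' x h = c2v (G' (v2c x) * v2c h)" for x h
  define f where "f y = c2v (F (v2c y))" for y
  define H where "H y = (cmod (G' y))^2 *\<^sub>R F (G y)" for y
  have S2eq: "S2 = v2c -` S" by (auto simp: S2_def c2v_image_iff)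
  have S2m: "S2 \<in> sets lebesgue"
    using measurable_sets[OF lebesgue_v2c(1) S] by (simp add: S2eq)
  have imS: "v2c ` S2 = S" by (force simp: S2_def image_image)
  have derg: "(g has_derivative g' x) (at x within S2)" if x: "x \<in> S2" for x
  proof -
    have d1: "(v2c has_derivative v2c) (at x within S2)"
      by (simp add: bounded_linear_imp_has_derivative bounded_linear_v2c)
    have "v2c x \<in> S" using x imS by blast
    then have d2: "(G has_derivative (\<lambda>h. G' (v2c x) * h)) (at (v2c x) within v2c ` S2)"
      using der[of "v2c x"] imS by (simp add: has_field_derivative_def)
    have "((G \<circ> v2c) has_derivative ((\<lambda>h. G' (v2c x) * h) \<circ> v2c)) (at x within S2)"
      by (rule diff_chain_within[OF d1 d2])
    from bounded_linear.has_derivative[OF bounded_linear_c2v this]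
    show ?thesis by (simp add: g_def[abs_def] g'_def[abs_def] o_def)
  qed
  have injg: "inj_on g S2"
    using inj by (auto simp: inj_on_def g_def S2_def)
  have det: "\<bar>det (matrix (g' x))\<bar> *\<^sub>R f (g x) = c2v (H (v2c x))" for x
    by (simp add: g'_def[abs_def] det_c2v_mult f_def g_def H_def linear_scale[OF linear_c2v])
  have gS: "g ` S2 = c2v ` (G ` S)"
    by (auto simp: g_def S2_def image_image)
  have main: "(\<lambda>x. c2v (H (v2c x))) absolutely_integrable_on c2v ` S \<and>
       integral (c2v ` S) (\<lambda>x. c2v (H (v2c x))) = c2v b \<longleftrightarrow>
      (\<lambda>x. c2v (F (v2c x))) absolutely_integrable_on c2v ` (G ` S) \<and>
       integral (c2v ` (G ` S)) (\<lambda>x. c2v (F (v2c x))) = c2v b"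
    using has_absolute_integral_change_of_variables[OF S2m derg injg, of f "c2v b"]
    unfolding det gS by (simp add: S2_def f_def[abs_def])
  show ?thesis
    using main absint_c2v[where F=H and A=S] absint_c2v[where F=F and A="G ` S"]
    by (auto simp: H_def[abs_def])
qed

lemma exp_strip_inj: "inj_on exp {u. c < Im u \<and> Im u \<le> c + 2*pi}"
proof (rule inj_onI)
  fix u v assume u: "u \<in> {u. c < Im u \<and> Im u \<le> c + 2*pi}" and v: "v \<in> {u. c < Im u \<and> Im u \<le> c + 2*pi}"
    and e: "exp u = exp v"
  then obtain n :: int where n: "u = v + (of_int (2 * n) * pi) * \<i>" using exp_eq by blast
  then have "Im u - Im v = 2 * n * pi" by simp
  moreover have "\<bar>Im u - Im v\<bar> < 2 * pi" using u v by auto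
  ultimately have "\<bar>real_of_int n\<bar> < 1"
    by (simp add: abs_mult)
  then have "n = 0" by linarith
  with n show "u = v" by simp
qed

lemma exp_strip_image: "exp ` {u. c < Im u \<and> Im u \<le> c + 2*pi} = -{0}"
proof
  show "exp ` {u. c < Im u \<and> Im u \<le> c + 2*pi} \<subseteq> -{0}" by auto
next
  show "-{0} \<subseteq> exp ` {u. c < Im u \<and> Im u \<le> c + 2*pi}"
  proof
    fix w :: complex assume "w \<in> -{0}"
    then have w: "w \<noteq> 0" by simp
    define n where "n = \<lfloor>(c + 2*pi - Im (Ln w)) / (2*pi)\<rfloor>"
    define u where "u = Ln w + \<i> * (of_int n * (of_real pi * 2))"
    have "exp u = w" using w by (simp add: u_def)
    moreover have "real_of_int n \<le> (c + 2*pi - Im (Ln w)) / (2*pi)"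
      "(c + 2*pi - Im (Ln w)) / (2*pi) < real_of_int n + 1"
      unfolding n_def by linarith+
    then have "c < Im u \<and> Im u \<le> c + 2*pi"
      by (auto simp: u_def field_simps)
    ultimately show "w \<in> exp ` {u. c < Im u \<and> Im u \<le> c + 2*pi}" by force
  qed
qed

lemma scale_strip:
  assumes d: "d > 0"
  shows "(\<lambda>u. of_real d * u) ` {u. c < Im u \<and> Im u \<le> c + 2*pi/d} =
         {v. d*c < Im v \<and> Im v \<le> d*c + 2*pi}"
proof
  show "(\<lambda>u. of_real d * u) ` {u. c < Im u \<and> Im u \<le> c + 2*pi/d} \<subseteq> {v. d*c < Im v \<and> Im v \<le> d*c + 2*pi}"
    using d by (auto simp: field_simps)
next
  show "{v. d*c < Im v \<and> Im v \<le> d*c + 2*pi} \<subseteq> (\<lambda>u. of_real d * u) ` {u. c < Im u \<and> Im u \<le> c + 2*pi/d}"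
  proof
    fix v assume v: "v \<in> {v. d*c < Im v \<and> Im v \<le> d*c + 2*pi}"
    have "v = of_real d * (v / of_real d)" using d by simp
    moreover have "v / of_real d \<in> {u. c < Im u \<and> Im u \<le> c + 2*pi/d}"
      using v d by (auto simp: field_simps Im_divide_of_real)
    ultimately show "v \<in> (\<lambda>u. of_real d * u) ` {u. c < Im u \<and> Im u \<le> c + 2*pi/d}" by blast
  qed
qed

lemma expd_strip:
  assumes d: "d > (0::real)"
  shows "inj_on (\<lambda>u. exp (of_real d * u)) {u. c < Im u \<and> Im u \<le> c + 2*pi/d}"
    and "(\<lambda>u. exp (of_real d * u)) ` {u. c < Im u \<and> Im u \<le> c + 2*pi/d} = -{0}"
proof -
  have eq: "(\<lambda>u. exp (of_real d * u)) = exp \<circ> (\<lambda>u. of_real d * u)" by auto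
  have i1: "inj_on (\<lambda>u. of_real d * u) {u. c < Im u \<and> Im u \<le> c + 2*pi/d}"
    using d by (auto simp: inj_on_def)
  show "inj_on (\<lambda>u. exp (of_real d * u)) {u. c < Im u \<and> Im u \<le> c + 2*pi/d}"
    unfolding eq using i1 exp_strip_inj[of "d*c"] scale_strip[OF d, of c]
    by (simp add: comp_inj_on)
  show "(\<lambda>u. exp (of_real d * u)) ` {u. c < Im u \<and> Im u \<le> c + 2*pi/d} = -{0}"
    unfolding eq image_comp[symmetric] scale_strip[OF d] by (rule exp_strip_image)
qed

lemma strip_lebesgue: "{u::complex. c < Im u \<and> Im u \<le> e} \<in> sets lebesgue"
proof -
  have "{u::complex. c < Im u \<and> Im u \<le> e} = {u. c < Im u} \<inter> {u. Im u \<le> e}" by auto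
  moreover have "{u::complex. c < Im u} \<in> sets lebesgue" by (simp add: open_halfspace_Im_gt borel_open)
  moreover have "{u::complex. Im u \<le> e} \<in> sets lebesgue" by (simp add: closed_halfspace_Im_le borel_closed)
  ultimately show ?thesis by simp
qed

lemma compact_sq_set: "compact {\<zeta>::complex. cmod (a + \<zeta>^2) \<le> 1}"
  unfolding compact_eq_bounded_closed
proof (intro conjI)
  show "closed {\<zeta>::complex. cmod (a + \<zeta>^2) \<le> 1}"
    by (intro closed_Collect_le continuous_intros)
  show "bounded {\<zeta>::complex. cmod (a + \<zeta>^2) \<le> 1}"
  proof (rule boundedI)
    fix \<zeta> :: complex assume "\<zeta> \<in> {\<zeta>. cmod (a + \<zeta>^2) \<le> 1}"
    then have h: "cmod (a + \<zeta>^2) \<le> 1" by simp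
    have "cmod (\<zeta>^2) = cmod ((a + \<zeta>^2) - a)" by simp
    also have "\<dots> \<le> cmod (a + \<zeta>^2) + cmod a" by (rule norm_triangle_ineq4)
    finally have h2: "cmod \<zeta> * cmod \<zeta> \<le> 1 + cmod a" using h by (simp add: norm_mult power2_eq_square)
    show "cmod \<zeta> \<le> 1 + cmod a"
    proof (cases "cmod \<zeta> \<le> 1")
      case True then show ?thesis by (simp add: add_increasing2)
    next
      case False
      then have "1 * cmod \<zeta> \<le> cmod \<zeta> * cmod \<zeta>" using mult_right_mono[of 1 "cmod \<zeta>" "cmod \<zeta>"] by simp
      then show ?thesis using h2 by simp
    qed
  qed
qed

lemma inv_dist_integrable:
  "(\<lambda>w. complex_of_real (indicator (cball 0 1) w / cmod (a - w))) absolutely_integrable_on UNIV"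
proof -
  define U where "U = {\<zeta>::complex. 0 < Re \<zeta>}"
  define G where "G \<zeta> = a + \<zeta>^2" for \<zeta> :: complex
  define F where "F w = complex_of_real (indicator (cball 0 1) w / cmod (a - w))" for w
  define K where "K = {\<zeta>::complex. cmod (a + \<zeta>^2) \<le> 1}"
  have Um: "U \<in> sets lebesgue" unfolding U_def by (simp add: open_halfspace_Re_gt borel_open)
  have der: "(G has_field_derivative (2 * \<zeta>)) (at \<zeta> within U)" for \<zeta>
    unfolding G_def by (auto intro!: derivative_eq_intros)
  have inj: "inj_on G U"
  proof (rule inj_onI)
    fix x y assume x: "x \<in> U" and y: "y \<in> U" and e: "G x = G y"
    then have "(x - y) * (x + y) = 0" by (simp add: G_def algebra_simps power2_eq_square)
    moreover have "x + y \<noteq> 0" using x y by (auto simp: U_def complex_eq_iff)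
    ultimately show "x = y" by simp
  qed
  have Kl: "K \<in> lmeasurable" unfolding K_def by (rule lmeasurable_compact[OF compact_sq_set])
  define E where "E \<zeta> = complex_of_real (4 * indicator K \<zeta>)" for \<zeta>
  have E: "E absolutely_integrable_on U"
    unfolding set_integrable_def
  proof (rule Bochner_Integration.integrable_bound)
    show "integrable lebesgue (\<lambda>x. 4 * indicator K x :: real)"
      using Kl by (intro integrable_mult_right integrable_real_indicator) (auto simp: fmeasurable_def)
    show "(\<lambda>x. indicator U x *\<^sub>R E x) \<in> borel_measurable lebesgue"
    proof -
      have [measurable]: "U \<in> sets lebesgue" "K \<in> sets lebesgue" using Um Kl by (auto simp: fmeasurable_def)
      show ?thesis unfolding E_def by measurable
    qed
    show "AE x in lebesgue. norm (indicator U x *\<^sub>R E x) \<le> norm (4 * indicator K x :: real)"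
      by (auto simp: E_def indicator_def)
  qed
  have nm: "cmod (- a - b) = cmod (a + b)" for b
  proof -
    have "- a - b = - (a + b)" by simp
    then show ?thesis by (simp only: norm_minus_cancel)
  qed
  have eqE: "(cmod (2 * \<zeta>))^2 *\<^sub>R F (G \<zeta>) = E \<zeta>" if "\<zeta> \<in> U" for \<zeta>
  proof -
    have "\<zeta> \<noteq> 0" using that by (auto simp: U_def)
    then show ?thesis
      by (simp add: F_def G_def E_def K_def indicator_def norm_mult norm_power power2_eq_square
          scaleR_conv_of_real mem_cball dist_norm nm)
  qed
  have LHS: "(\<lambda>\<zeta>. (cmod (2 * \<zeta>))^2 *\<^sub>R F (G \<zeta>)) absolutely_integrable_on U"
  proof -
    have "set_integrable lebesgue U (\<lambda>\<zeta>. (cmod (2 * \<zeta>))^2 *\<^sub>R F (G \<zeta>)) \<longleftrightarrow> set_integrable lebesgue U E"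
      by (rule set_integrable_cong) (use eqE in auto)
    then show ?thesis using E by simp
  qed
  have FGU: "F absolutely_integrable_on (G ` U)"
    using cov_complex[OF Um der inj, where F=F and b="integral U (\<lambda>\<zeta>. (cmod (2 * \<zeta>))^2 *\<^sub>R F (G \<zeta>))"] LHS
    by blast
  have neg: "negligible {x. \<i> \<bullet> x = Im a}"
    by (rule negligible_hyperplane) simp
  have sub: "UNIV - G ` U \<subseteq> {x. \<i> \<bullet> x = Im a}"
  proof
    fix w assume w: "w \<in> UNIV - G ` U"
    define v where "v = csqrt (w - a)"
    have "G v = w" by (simp add: G_def v_def)
    then have "v \<notin> U" using w by blast
    then have "Re v = 0" using Re_csqrt[of "w - a"] by (simp add: U_def v_def)
    then have "Im (v^2) = 0" by (simp add: power2_eq_square)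
    then have "Im (w - a) = 0" by (simp add: v_def)
    then show "w \<in> {x. \<i> \<bullet> x = Im a}" by (simp add: inner_complex_def)
  qed
  show ?thesis
    unfolding F_def[symmetric]
  proof (rule absolutely_integrable_spike_set_eq[THEN iffD1, OF _ _ FGU])
    show "negligible {x \<in> G ` U - UNIV. F x \<noteq> 0}" by simp
    show "negligible {x \<in> UNIV - G ` U. F x \<noteq> 0}"
      by (rule negligible_subset[OF neg]) (use sub in blast)
  qed
qed

definition omg :: "nat \<Rightarrow> complex" where "omg d = exp (2 * of_real pi * \<i> / of_nat d)"

lemma omg_pow: "d > 0 \<Longrightarrow> omg d ^ n = exp (2 * of_real pi * \<i> * of_nat n / of_nat d)"
  unfolding omg_def exp_of_nat_mult[symmetric] by (simp add: field_simps)

lemma omg_pow_d: "d > 0 \<Longrightarrow> omg d ^ d = 1"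
  by (simp add: omg_pow)

lemma omg_nonzero [simp]: "omg d \<noteq> 0" by (simp add: omg_def)

lemma omg_pow_eq_1: assumes "d > 0" shows "omg d ^ m = 1 \<longleftrightarrow> d dvd m"
proof
  assume "omg d ^ m = 1"
  then have "exp (2 * of_real pi * \<i> * of_nat m / of_nat d) = 1" using omg_pow[OF assms] by simp
  then obtain n :: int where "Im (2 * of_real pi * \<i> * of_nat m / of_nat d) = 2 * pi * n"
    by (auto simp: exp_eq_1)
  then have "2 * pi * real m / real d = 2 * pi * n" by (simp add: Im_divide_of_real)
  then have "real m = real d * n" using assms by (simp add: field_simps)
  then have "int m = int d * n" by (metis of_int_eq_iff of_int_mult of_int_of_nat_eq)
  then show "d dvd m" by (metis dvd_triv_left int_dvd_int_iff)
next
  assume "d dvd m"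
  then obtain q where "m = d * q" by blast
  then show "omg d ^ m = 1" by (simp add: power_mult omg_pow_d[OF assms])
qed

lemma root_sum:
  assumes "d > 0"
  shows "(\<Sum>k<d. (omg d ^ k)^m) = (if d dvd m then of_nat d else 0)"
proof -
  have "(\<Sum>k<d. (omg d ^ k)^m) = (\<Sum>k<d. (omg d ^ m)^k)"
    by (simp add: power_mult[symmetric] mult.commute)
  also have "\<dots> = (if d dvd m then of_nat d else 0)"
  proof (cases "d dvd m")
    case True
    then have "omg d ^ m = 1" using omg_pow_eq_1[OF assms] by simp
    then show ?thesis using True by simp
  next
    case False
    then have ne: "omg d ^ m \<noteq> 1" using omg_pow_eq_1[OF assms] by simp
    have "(omg d ^ m)^d = 1" by (simp add: power_mult[symmetric] mult.commute power_mult omg_pow_d[OF assms])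
    then show ?thesis using ne False by (simp add: sum_gp_strict)
  qed
  finally show ?thesis .
qed

lemma dvd_aux: fixes d p :: nat assumes "d \<ge> 2" "p < d" shows "d dvd (d + 1 - p) \<longleftrightarrow> p = 1"
proof
  assume dv: "d dvd (d + 1 - p)"
  show "p = 1"
  proof (rule ccontr)
    assume "p \<noteq> 1"
    then consider "p = 0" | "p \<ge> 2" by linarith
    then show False
    proof cases
      case 1
      then have "d dvd (d + 1)" using dv by simp
      then have "d dvd 1" using dvd_add_right_iff[of d d 1] by simp
      then show False using assms by simp
    next
      case 2
      then have "0 < d + 1 - p" "d + 1 - p < d" using assms by auto
      then show False using dv by (meson nat_dvd_not_less)
    qed
  qed
qed simp

lemma root_each:
  fixes \<zeta> z w :: complex
  assumes d: "d \<ge> 2" and r: "\<zeta>^d = w" and zw: "z^d \<noteq> w"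
  shows "\<zeta>^2 / (z - \<zeta>) = (\<Sum>p<d. z^p * \<zeta>^(d + 1 - p)) / (z^d - w)"
proof -
  obtain n where n: "d = Suc n" using d by (cases d) auto
  have f: "z^d - \<zeta>^d = (z - \<zeta>) * (\<Sum>p<d. z^p * \<zeta>^(n - p))"
    unfolding n by (rule diff_power_eq_sum)
  have zz: "z - \<zeta> \<noteq> 0" using zw r by auto
  have "\<zeta>^2 * (\<Sum>p<d. z^p * \<zeta>^(n - p)) = (\<Sum>p<d. z^p * \<zeta>^(d + 1 - p))"
    unfolding sum_distrib_left
  proof (rule sum.cong)
    fix p assume "p \<in> {..<d}"
    then have h: "2 + (n - p) = d + 1 - p" using n by auto
    have "\<zeta>^2 * (z^p * \<zeta>^(n - p)) = z^p * (\<zeta>^2 * \<zeta>^(n - p))" by (simp add: ac_simps)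
    also have "\<dots> = z^p * \<zeta>^(2 + (n - p))" by (simp only: power_add)
    finally show "\<zeta>^2 * (z^p * \<zeta>^(n - p)) = z^p * \<zeta>^(d + 1 - p)" by (simp only: h)
  qed simp
  moreover have S0: "(\<Sum>p<d. z^p * \<zeta>^(n - p)) \<noteq> 0" using f zw r by auto
  ultimately show ?thesis
  proof -
    assume A: "\<zeta>^2 * (\<Sum>p<d. z^p * \<zeta>^(n - p)) = (\<Sum>p<d. z^p * \<zeta>^(d + 1 - p))"
    have "\<zeta>^2 / (z - \<zeta>) = (\<zeta>^2 * (\<Sum>p<d. z^p * \<zeta>^(n - p))) / ((z - \<zeta>) * (\<Sum>p<d. z^p * \<zeta>^(n - p)))"
      using S0 by simp
    also have "\<dots> = (\<Sum>p<d. z^p * \<zeta>^(d + 1 - p)) / (z^d - w)"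
      using A f r by simp
    finally show ?thesis .
  qed
qed

lemma key_sum:
  fixes \<rho> z w :: complex
  assumes d: "d \<ge> 2" and r: "\<rho>^d = w" and zw: "z^d \<noteq> w"
  shows "(\<Sum>k<d. (omg d ^ k * \<rho>)^2 / (z - omg d ^ k * \<rho>)) = of_nat d * z * w / (z^d - w)"
proof -
  have d0: "d > 0" using d by simp
  have rk: "(omg d ^ k * \<rho>)^d = w" for k
    by (simp add: power_mult_distrib r power_mult[symmetric] mult.commute[of k] power_mult omg_pow_d[OF d0])
  have "(\<Sum>k<d. (omg d ^ k * \<rho>)^2 / (z - omg d ^ k * \<rho>))
      = (\<Sum>k<d. (\<Sum>p<d. z^p * (omg d ^ k * \<rho>)^(d + 1 - p)) / (z^d - w))"
    by (rule sum.cong) (auto simp: root_each[OF d rk zw])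
  also have "\<dots> = (\<Sum>k<d. \<Sum>p<d. z^p * (omg d ^ k * \<rho>)^(d + 1 - p)) / (z^d - w)"
    by (simp only: sum_divide_distrib)
  also have "\<dots> = (\<Sum>p<d. \<Sum>k<d. z^p * (omg d ^ k * \<rho>)^(d + 1 - p)) / (z^d - w)"
    by (subst sum.swap) (rule refl)
  also have "\<dots> = (\<Sum>p<d. z^p * (\<Sum>k<d. (omg d ^ k * \<rho>)^(d + 1 - p))) / (z^d - w)"
    by (simp only: sum_distrib_left)
  also have "(\<Sum>p<d. z^p * (\<Sum>k<d. (omg d ^ k * \<rho>)^(d + 1 - p))) =
      (\<Sum>p<d. if p = 1 then z * (of_nat d * \<rho>^d) else 0)"
  proof (rule sum.cong)
    fix p assume p: "p \<in> {..<d}"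
    have "(\<Sum>k<d. (omg d ^ k * \<rho>)^(d + 1 - p)) = \<rho>^(d+1-p) * (\<Sum>k<d. (omg d ^ k)^(d + 1 - p))"
      by (simp add: power_mult_distrib sum_distrib_left mult.commute)
    also have "\<dots> = \<rho>^(d+1-p) * (if p = 1 then of_nat d else 0)"
      using root_sum[OF d0, of "d + 1 - p"] dvd_aux[OF d, of p] p by simp
    finally show "z^p * (\<Sum>k<d. (omg d ^ k * \<rho>)^(d + 1 - p)) = (if p = 1 then z * (of_nat d * \<rho>^d) else 0)"
      by auto
  qed simp
  also have "\<dots> = z * (of_nat d * w)" using d r by simp
  finally show ?thesis by simp
qed

definition Tk :: "nat \<Rightarrow> nat \<Rightarrow> complex set" where
  "Tk d k = {u. 2*pi*k/d < Im u \<and> Im u \<le> 2*pi*k/d + 2*pi/d}"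
definition gk :: "nat \<Rightarrow> complex \<Rightarrow> complex" where
  "gk d u = exp (of_real (real d) * u)"
definition rho :: "nat \<Rightarrow> complex \<Rightarrow> complex" where
  "rho d w = exp (the_inv_into (Tk d 0) (gk d) w)"
definition zk :: "nat \<Rightarrow> nat \<Rightarrow> complex \<Rightarrow> complex" where
  "zk d k w = omg d ^ k * rho d w"

lemma Tk_inj: "d > 0 \<Longrightarrow> inj_on (gk d) (Tk d k)"
  unfolding Tk_def gk_def by (rule expd_strip) simp
lemma Tk_image: "d > 0 \<Longrightarrow> gk d ` (Tk d k) = -{0}"
  unfolding Tk_def gk_def by (rule expd_strip) simp
lemma Tk_sets: "Tk d k \<in> sets lebesgue"
  unfolding Tk_def by (rule strip_lebesgue)

lemma rho_pow:
  assumes d: "d > 0" and w: "w \<noteq> 0"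
  shows "rho d w ^ d = w"
proof -
  have "w \<in> gk d ` Tk d 0" using Tk_image[OF d] w by simp
  then have "gk d (the_inv_into (Tk d 0) (gk d) w) = w"
    using f_the_inv_into_f[OF Tk_inj[OF d]] by blast
  then show ?thesis
    by (simp add: rho_def gk_def exp_of_nat_mult[symmetric])
qed

lemma rho_nonzero [simp]: "rho d w \<noteq> 0" by (simp add: rho_def)

lemma zk_gk:
  assumes d: "d > 0" and u: "u \<in> Tk d k"
  shows "zk d k (gk d u) = exp u"
proof -
  define v where "v = u - of_real (2*pi*k/d) * \<i>"
  have v: "v \<in> Tk d 0" using u d by (auto simp: Tk_def v_def)
  have "gk d v = gk d u"
  proof -
    have "of_real (real d) * v = of_real (real d) * u + \<i> * (of_int (- int k) * (of_real pi * 2))"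
      using d by (simp add: v_def field_simps)
    then show ?thesis unfolding gk_def by (metis exp_plus_2pin)
  qed
  then have "the_inv_into (Tk d 0) (gk d) (gk d u) = v"
    using the_inv_into_f_f[OF Tk_inj[OF d] v] by simp
  then have "rho d (gk d u) = exp v" by (simp add: rho_def)
  also have "exp v = exp u / exp (of_real (2*pi*k/d) * \<i>)"
    by (simp add: v_def exp_diff)
  finally have "rho d (gk d u) = exp u / exp (of_real (2*pi*k/d) * \<i>)" .
  moreover have "omg d ^ k = exp (of_real (2*pi*k/d) * \<i>)"
    using omg_pow[OF d, of k] by (simp add: field_simps)
  ultimately show ?thesis by (simp add: zk_def)
qed

lemma zk_pow:
  assumes d: "d > 0" and w: "w \<noteq> 0"
  shows "zk d k w ^ d = w"
  by (simp add: zk_def power_mult_distrib rho_pow[OF d w] power_mult[symmetric] mult.commute[of k]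
      power_mult omg_pow_d[OF d])

lemma zk_nonzero [simp]: "zk d k w \<noteq> 0" by (simp add: zk_def)

lemma deriv_powd: "deriv (\<lambda>w. w^d) \<zeta> = of_nat d * (\<zeta>::complex)^(d-1)"
proof (rule DERIV_imp_deriv)
  show "((\<lambda>w. w^d) has_field_derivative of_nat d * \<zeta>^(d-1)) (at \<zeta>)"
    by (rule derivative_eq_intros refl | simp)+
qed

definition PB :: "nat \<Rightarrow> complex \<Rightarrow> (complex \<Rightarrow> complex) \<Rightarrow> complex \<Rightarrow> complex" where
  "PB d z \<nu> \<zeta> = pullback (\<lambda>w. w^d) \<nu> \<zeta> / (z - \<zeta>)"

lemma PB_eq: "PB d z \<nu> \<zeta> = \<nu> (\<zeta>^d) * cnj (of_nat d * \<zeta>^(d-1)) / (of_nat d * \<zeta>^(d-1)) / (z - \<zeta>)"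
  by (simp add: PB_def pullback_def deriv_powd)

definition fk :: "nat \<Rightarrow> complex \<Rightarrow> (complex \<Rightarrow> complex) \<Rightarrow> nat \<Rightarrow> complex \<Rightarrow> complex" where
  "fk d z \<nu> k w = of_real ((cmod (zk d k w))^2 / ((real d)^2 * (cmod w)^2)) * PB d z \<nu> (zk d k w)"

lemma fk_gk:
  assumes d: "d > 0" and u: "u \<in> Tk d k"
  shows "(cmod (of_real (real d) * exp (of_real (real d) * u)))^2 *\<^sub>R fk d z \<nu> k (gk d u)
       = (cmod (exp u))^2 *\<^sub>R PB d z \<nu> (exp u)"
proof -
  have e: "zk d k (gk d u) = exp u" by (rule zk_gk[OF d u])
  have nz: "cmod (gk d u) \<noteq> 0" by (simp add: gk_def)
  show ?thesis
    using d nz unfolding fk_def e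
    by (simp add: gk_def norm_mult scaleR_conv_of_real field_simps)
qed

lemma conj_ratio:
  fixes \<zeta> :: complex
  assumes "\<zeta> \<noteq> 0" "d > 0"
  shows "of_real ((cmod \<zeta>)^2) * cnj (\<zeta>^(d-1)) / \<zeta>^(d-1) = of_real ((cmod (\<zeta>^d))^2) * \<zeta>^2 / (\<zeta>^d)^2"
proof -
  obtain n where n: "d = Suc n" using assms by (cases d) auto
  have a: "of_real ((cmod \<zeta>)^2) = \<zeta> * cnj \<zeta>" by (rule complex_norm_square)
  have b: "of_real ((cmod (\<zeta>^d))^2) = \<zeta>^d * cnj \<zeta>^d"
    using complex_norm_square[of "\<zeta>^d"] by simp
  have l: "of_real ((cmod \<zeta>)^2) * cnj (\<zeta>^(d-1)) / \<zeta>^(d-1) = \<zeta> * cnj \<zeta> * cnj \<zeta>^n / \<zeta>^n"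
    using a n by simp
  have r: "of_real ((cmod (\<zeta>^d))^2) * \<zeta>^2 / (\<zeta>^d)^2 = \<zeta>^Suc n * cnj \<zeta>^Suc n * \<zeta>^2 / (\<zeta>^Suc n)^2"
    using b n by simp
  show ?thesis unfolding l r using assms(1)
    by (simp add: field_simps power2_eq_square)
qed

lemma fk_eq:
  assumes d: "d > 0" and w: "w \<noteq> 0"
  shows "fk d z \<nu> k w = \<nu> w * ((zk d k w)^2 / ((of_nat d)^2 * w^2 * (z - zk d k w)))"
proof -
  define \<zeta> where "\<zeta> = zk d k w"
  have r: "\<zeta>^d = w" using zk_pow[OF d w] by (simp add: \<zeta>_def)
  have nz: "\<zeta> \<noteq> 0" by (simp add: \<zeta>_def)
  have c: "cnj (of_nat d * \<zeta>^(d-1)) = of_nat d * cnj (\<zeta>^(d-1))" by simp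
  have "fk d z \<nu> k w = of_real ((cmod \<zeta>)^2) * cnj (\<zeta>^(d-1)) / \<zeta>^(d-1) * (\<nu> w / ((real d)^2 * (cmod w)^2) / (z - \<zeta>))"
    unfolding fk_def PB_eq \<zeta>_def[symmetric] r c using d nz
    by (simp add: field_simps)
  also have "\<dots> = of_real ((cmod w)^2) * \<zeta>^2 / w^2 * (\<nu> w / ((real d)^2 * (cmod w)^2) / (z - \<zeta>))"
    using conj_ratio[OF nz d] r by simp
  also have "\<dots> = \<nu> w * (\<zeta>^2 / ((of_nat d)^2 * w^2 * (z - \<zeta>)))"
  proof -
    have "complex_of_real (cmod w) \<noteq> 0" using w by simp
    then show ?thesis using w d by (cases "z = \<zeta>") (simp_all add: field_simps)
  qed
  finally show ?thesis by (simp add: \<zeta>_def)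
qed

lemma alg_aux:
  fixes a z w v D :: complex
  assumes "a \<noteq> 0" "z \<noteq> 0" "w \<noteq> 0" "z * a - w \<noteq> 0" "D \<noteq> 0"
  shows "v / (D^2 * w^2) * (D * z * w / (z * a - w)) = 1 / (D * a) * (v / (z * a - w) - v / (0 - w))"
  using assms by (simp add: field_simps power2_eq_square)

lemma fk_sum:
  assumes d: "d \<ge> 2" and w: "w \<noteq> 0" and z: "z \<noteq> 0" and zw: "z^d \<noteq> w"
  shows "(\<Sum>k<d. fk d z \<nu> k w) = 1 / (of_nat d * z^(d-1)) * (\<nu> w / (z^d - w) - \<nu> w / (0 - w))"
proof -
  have d0: "d > 0" using d by simp
  have "(\<Sum>k<d. fk d z \<nu> k w) = (\<Sum>k<d. \<nu> w / ((of_nat d)^2 * w^2) * ((omg d ^ k * rho d w)^2 / (z - omg d ^ k * rho d w)))"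
    by (rule sum.cong) (simp_all add: fk_eq[OF d0 w] zk_def)
  also have "\<dots> = \<nu> w / ((of_nat d)^2 * w^2) * (\<Sum>k<d. (omg d ^ k * rho d w)^2 / (z - omg d ^ k * rho d w))"
    by (simp only: sum_distrib_left)
  also have "\<dots> = \<nu> w / ((of_nat d)^2 * w^2) * (of_nat d * z * w / (z^d - w))"
    by (simp only: key_sum[OF d rho_pow[OF d0 w] zw])
  also have "\<dots> = 1 / (of_nat d * z^(d-1)) * (\<nu> w / (z^d - w) - \<nu> w / (0 - w))"
  proof -
    have zd: "z^d = z * z^(d-1)" using d0 by (metis power_eq_if not_gr0)
    have "z * z^(d-1) - w \<noteq> 0" using zw zd by simp
    then show ?thesis unfolding zd using w z d0 by (intro alg_aux) simp_all
  qed
  finally show ?thesis .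
qed

definition TT :: "complex set" where "TT = {u. 0 < Im u \<and> Im u \<le> 0 + 2*pi}"

lemma Tk_sub: assumes "k < d" shows "Tk d k \<subseteq> TT"
proof
  fix u assume u: "u \<in> Tk d k"
  have "0 \<le> 2*pi*k/d" by simp
  moreover have "2*pi*k/d + 2*pi/d \<le> 2*pi"
  proof -
    have "2*pi*k/d + 2*pi/d = 2*pi * (real k + 1) / d" by (simp add: add_divide_distrib algebra_simps)
    also have "\<dots> \<le> 2*pi * real d / d"
      using assms by (intro divide_right_mono mult_left_mono) auto
    also have "\<dots> \<le> 2*pi" by (cases "d = 0") auto
    finally show ?thesis .
  qed
  moreover from u have u1: "2*pi*k/d < Im u" "Im u \<le> 2*pi*k/d + 2*pi/d" by (auto simp: Tk_def)
  ultimately have "0 < Im u" "Im u \<le> 0 + 2*pi" by linarith+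
  then show "u \<in> TT" by (simp add: TT_def)
qed

lemma Tk_part:
  assumes d: "d > 0" and u: "u \<in> TT"
  shows "\<exists>k0<d. \<forall>k. (k < d \<and> u \<in> Tk d k) \<longleftrightarrow> k = k0"
proof -
  define t where "t = real d * Im u / (2*pi)"
  have t0: "0 < t" "t \<le> real d" using u d by (auto simp: TT_def t_def field_simps)
  have mem: "u \<in> Tk d k \<longleftrightarrow> real k < t \<and> t \<le> real k + 1" for k
    using d by (auto simp: Tk_def t_def field_simps)
  define k0 where "k0 = nat (\<lceil>t\<rceil> - 1)"
  have c1: "real_of_int \<lceil>t\<rceil> - 1 < t" "t \<le> real_of_int \<lceil>t\<rceil>" by linarith+
  have cpos: "\<lceil>t\<rceil> \<ge> 1" using t0 by linarith
  then have k0r: "real k0 = real_of_int \<lceil>t\<rceil> - 1" by (simp add: k0_def)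
  have k0d: "k0 < d"
  proof -
    have "\<lceil>t\<rceil> \<le> int d" using t0 by linarith
    then show ?thesis using cpos unfolding k0_def by (subst nat_less_iff) auto
  qed
  show ?thesis
  proof (intro exI[of _ k0] conjI allI)
    show "k0 < d" by (rule k0d)
  next
    fix k
    show "(k < d \<and> u \<in> Tk d k) \<longleftrightarrow> k = k0"
    proof
      assume "k < d \<and> u \<in> Tk d k"
      then have "real k < t" "t \<le> real k + 1" using mem by auto
      then have "\<lceil>t\<rceil> = int k + 1" by linarith
      then show "k = k0" by (simp add: k0_def)
    next
      assume "k = k0"
      then show "k < d \<and> u \<in> Tk d k" using k0d mem k0r c1 by simp
    qed
  qed
qed

lemma split_TT:
  fixes H :: "complex \<Rightarrow> complex"
  assumes d: "d > 0" and H: "\<And>k. k < d \<Longrightarrow> H absolutely_integrable_on Tk d k"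
  shows "H absolutely_integrable_on TT \<and> integral TT H = (\<Sum>k<d. integral (Tk d k) H)"
proof -
  have eq: "(\<lambda>u. if u \<in> TT then H u else 0) = (\<lambda>u. \<Sum>k<d. if u \<in> Tk d k then H u else 0)"
  proof
    fix u
    show "(if u \<in> TT then H u else 0) = (\<Sum>k<d. if u \<in> Tk d k then H u else 0)"
    proof (cases "u \<in> TT")
      case True
      then obtain k0 where k0: "k0 < d" "\<And>k. (k < d \<and> u \<in> Tk d k) \<longleftrightarrow> k = k0"
        using Tk_part[OF d] by blast
      have "(\<Sum>k<d. if u \<in> Tk d k then H u else 0) = (\<Sum>k<d. if k = k0 then H u else 0)"
        by (rule sum.cong) (use k0 in auto)
      also have "\<dots> = H u" using k0 by simp
      finally show ?thesis using True by simp
    next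
      case False
      then have "\<And>k. k < d \<Longrightarrow> u \<notin> Tk d k" using Tk_sub by blast
      then show ?thesis using False by simp
    qed
  qed
  have each: "(\<lambda>u. if u \<in> Tk d k then H u else 0) absolutely_integrable_on UNIV" if "k < d" for k
    using H[OF that] absolutely_integrable_restrict_UNIV by blast
  have sumI: "(\<lambda>u. \<Sum>k<d. if u \<in> Tk d k then H u else 0) absolutely_integrable_on UNIV"
    by (rule absolutely_integrable_sum) (use each in auto)
  have A: "H absolutely_integrable_on TT"
    using sumI unfolding eq[symmetric] absolutely_integrable_restrict_UNIV .
  have "integral TT H = integral UNIV (\<lambda>u. if u \<in> TT then H u else 0)"
    by (simp add: integral_restrict_UNIV)
  also have "\<dots> = (\<Sum>k<d. integral UNIV (\<lambda>u. if u \<in> Tk d k then H u else 0))"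
    unfolding eq by (rule integral_sum) (use each in \<open>auto simp: set_lebesgue_integral_eq_integral\<close>)
  also have "\<dots> = (\<Sum>k<d. integral (Tk d k) H)"
    by (simp add: integral_restrict_UNIV)
  finally show ?thesis using A by simp
qed

lemma TT_sets: "TT \<in> sets lebesgue" unfolding TT_def by (rule strip_lebesgue)

lemma cov_exp:
  fixes F :: "complex \<Rightarrow> complex"
  shows "(\<lambda>u. (cmod (exp u))^2 *\<^sub>R F (exp u)) absolutely_integrable_on TT \<and>
           integral TT (\<lambda>u. (cmod (exp u))^2 *\<^sub>R F (exp u)) = b
     \<longleftrightarrow> F absolutely_integrable_on (-{0}) \<and> integral (-{0}) F = b"
proof -
  have der: "(exp has_field_derivative exp u) (at u within TT)" for u
    by (rule DERIV_exp[THEN has_field_derivative_at_within])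
  have inj: "inj_on exp TT" unfolding TT_def by (rule exp_strip_inj)
  have im: "exp ` TT = -{0}" unfolding TT_def by (rule exp_strip_image)
  show ?thesis using cov_complex[OF TT_sets der inj, where F=F and b=b] unfolding im .
qed

lemma cov_gk:
  fixes F :: "complex \<Rightarrow> complex"
  assumes d: "d > 0"
  shows "(\<lambda>u. (cmod (of_real (real d) * exp (of_real (real d) * u)))^2 *\<^sub>R F (gk d u)) absolutely_integrable_on Tk d k \<and>
           integral (Tk d k) (\<lambda>u. (cmod (of_real (real d) * exp (of_real (real d) * u)))^2 *\<^sub>R F (gk d u)) = b
     \<longleftrightarrow> F absolutely_integrable_on (-{0}) \<and> integral (-{0}) F = b"
proof -
  have der: "(gk d has_field_derivative (of_real (real d) * exp (of_real (real d) * u))) (at u within Tk d k)" for u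
    unfolding gk_def by (auto intro!: derivative_eq_intros)
  show ?thesis using cov_complex[OF Tk_sets der Tk_inj[OF d], where F=F and b=b] unfolding Tk_image[OF d] .
qed

lemma Hk_iff:
  assumes d: "d > 0"
  shows "(\<lambda>u. (cmod (exp u))^2 *\<^sub>R PB d z \<nu> (exp u)) absolutely_integrable_on Tk d k \<and>
           integral (Tk d k) (\<lambda>u. (cmod (exp u))^2 *\<^sub>R PB d z \<nu> (exp u)) = b
     \<longleftrightarrow> fk d z \<nu> k absolutely_integrable_on (-{0}) \<and> integral (-{0}) (fk d z \<nu> k) = b"
proof -
  let ?L = "\<lambda>u. (cmod (of_real (real d) * exp (of_real (real d) * u)))^2 *\<^sub>R fk d z \<nu> k (gk d u)"
  let ?R = "\<lambda>u. (cmod (exp u))^2 *\<^sub>R PB d z \<nu> (exp u)"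
  have e: "\<And>u. u \<in> Tk d k \<Longrightarrow> ?L u = ?R u" using fk_gk[OF d] by blast
  have i1: "?L absolutely_integrable_on Tk d k \<longleftrightarrow> ?R absolutely_integrable_on Tk d k"
    by (rule set_integrable_cong) (use e in auto)
  have i2: "integral (Tk d k) ?L = integral (Tk d k) ?R"
    by (rule integral_cong) (use e in auto)
  show ?thesis using cov_gk[OF d, where F="fk d z \<nu> k" and k=k and b=b] unfolding i1 i2 .
qed

lemma absint_UNIV_iff: "f absolutely_integrable_on UNIV \<longleftrightarrow> integrable lebesgue f"
  by (simp add: set_integrable_def)

definition nu1 :: "complex \<Rightarrow> complex" where
  "nu1 w = complex_of_real (indicator (cball 0 1) w)"

lemma PB_nu1_meas: "PB d z nu1 \<in> borel_measurable lebesgue"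
proof -
  have e: "PB d z nu1 = (\<lambda>\<zeta>. complex_of_real (indicator (cball 0 1) (\<zeta>^d)) * cnj (of_nat d * \<zeta>^(d-1)) / (of_nat d * \<zeta>^(d-1)) / (z - \<zeta>))"
    by (rule ext) (simp add: PB_eq nu1_def)
  have bl: "f \<in> borel_measurable borel \<Longrightarrow> f \<in> borel_measurable lebesgue" for f :: "complex \<Rightarrow> complex"
    by (rule measurable_completion) (simp only: measurable_lborel2)
  have cont: "continuous_on UNIV f \<Longrightarrow> f \<in> borel_measurable borel" for f :: "complex \<Rightarrow> complex"
    by (rule borel_measurable_continuous_onI)
  have cl: "closed ((\<lambda>\<zeta>::complex. \<zeta>^d) -` cball 0 1)"
    by (intro closed_vimage continuous_intros) simp
  have eA: "(\<lambda>\<zeta>::complex. complex_of_real (indicator (cball 0 1) (\<zeta>^d))) =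
            (\<lambda>\<zeta>. complex_of_real (indicator ((\<lambda>\<zeta>. \<zeta>^d) -` cball 0 1) \<zeta>))"
    by (auto simp: indicator_def)
  have mA: "(\<lambda>\<zeta>::complex. complex_of_real (indicator (cball 0 1) (\<zeta>^d))) \<in> borel_measurable borel"
    unfolding eA
    by (rule measurable_compose[OF borel_measurable_indicator borel_measurable_of_real]) (use cl borel_closed in blast)
  have mB: "(\<lambda>x::complex. cnj (of_nat d * x^(d-1))) \<in> borel_measurable borel"
    by (rule cont) (intro continuous_intros)
  have mC: "(\<lambda>x::complex. of_nat d * x^(d-1)) \<in> borel_measurable borel"
    by (rule cont) (intro continuous_intros)
  have mD: "(\<lambda>x::complex. z - x) \<in> borel_measurable borel"
    by (rule cont) (intro continuous_intros)
  show ?thesis unfolding e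
    by (rule bl, intro borel_measurable_divide borel_measurable_times mA mB mC mD)
qed

lemma PB_nu1_bound:
  assumes d: "d > 0"
  shows "norm (PB d z nu1 \<zeta>) \<le> indicator (cball 0 1) \<zeta> / cmod (z - \<zeta>)"
proof -
  define c where "c = of_nat d * \<zeta>^(d-1)"
  have r: "norm (cnj c / c) \<le> 1" by (cases "c = 0") (simp_all add: norm_divide)
  have i: "indicator (cball 0 1) (\<zeta>^d) = (indicator (cball 0 1) \<zeta> :: real)"
    using d by (simp add: indicator_def norm_power power_le_one_iff)
  have e: "PB d z nu1 \<zeta> = nu1 (\<zeta>^d) * (cnj c / c) / (z - \<zeta>)" by (simp add: PB_eq c_def)
  have n1: "norm (nu1 (\<zeta>^d)) = indicator (cball 0 1) \<zeta>" by (simp add: nu1_def i)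
  have "norm (PB d z nu1 \<zeta>) = norm (nu1 (\<zeta>^d)) * norm (cnj c / c) / norm (z - \<zeta>)"
    unfolding e by (simp only: norm_divide norm_mult)
  also have "\<dots> = indicator (cball 0 1) \<zeta> * norm (cnj c / c) / cmod (z - \<zeta>)" by (simp only: n1)
  also have "\<dots> \<le> indicator (cball 0 1) \<zeta> * 1 / cmod (z - \<zeta>)"
    by (intro divide_right_mono mult_left_mono r) simp_all
  finally show ?thesis by simp
qed

lemma PB_nu1_int:
  assumes d: "d > 0"
  shows "PB d z nu1 absolutely_integrable_on (-{0})"
proof -
  have "integrable lebesgue (PB d z nu1)"
  proof (rule Bochner_Integration.integrable_bound)
    show "integrable lebesgue (\<lambda>w. complex_of_real (indicator (cball 0 1) w / cmod (z - w)))"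
      using inv_dist_integrable[of z] by (simp add: absint_UNIV_iff)
    show "PB d z nu1 \<in> borel_measurable lebesgue" by (rule PB_nu1_meas)
    show "AE x in lebesgue. norm (PB d z nu1 x) \<le> norm (complex_of_real (indicator (cball 0 1) x / cmod (z - x)))"
    proof (rule AE_I2)
      fix x
      have "norm (complex_of_real (indicator (cball 0 1) x / cmod (z - x))) = indicator (cball 0 1) x / cmod (z - x)"
        by (simp only: norm_of_real) (simp add: indicator_def)
      then show "norm (PB d z nu1 x) \<le> norm (complex_of_real (indicator (cball 0 1) x / cmod (z - x)))"
        using PB_nu1_bound[OF d, where \<zeta>=x and z=z] by simp
    qed
  qed
  then have "PB d z nu1 absolutely_integrable_on UNIV" by (simp add: absint_UNIV_iff)
  then show ?thesis
  proof (rule set_integrable_subset)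
    show "- {0} \<in> sets lebesgue" by (simp add: borel_open)
  qed simp
qed

lemma borel_leb: "f \<in> borel_measurable borel \<Longrightarrow> f \<in> borel_measurable lebesgue"
  by (rule measurable_completion) (simp only: measurable_lborel2)

lemma minus0:
  fixes f :: "complex \<Rightarrow> complex"
  shows "f absolutely_integrable_on (-{0}) \<longleftrightarrow> f absolutely_integrable_on UNIV"
    and "integral (-{0}) f = integral UNIV f"
proof -
  have n1: "negligible {x \<in> -{0} - UNIV. f x \<noteq> 0}" by simp
  have n2: "negligible {x \<in> UNIV - -{0}. f x \<noteq> 0}"
    by (rule negligible_subset[of "{0}"]) auto
  show "f absolutely_integrable_on (-{0}) \<longleftrightarrow> f absolutely_integrable_on UNIV"
    by (rule absolutely_integrable_spike_set_eq[OF n1 n2])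
  show "integral (-{0}) f = integral UNIV f"
    by (rule integral_spike_set[OF n1 n2])
qed

theorem lemma5p2:
  fixes d :: nat and \<mu> :: "complex \<Rightarrow> complex" and z :: complex
  assumes "d \<ge> 2"
    and "\<mu> \<in> borel_measurable lebesgue"
    and "\<exists>B. AE \<zeta> in lebesgue. norm (\<mu> \<zeta>) \<le> B"
    and "AE \<zeta> in lebesgue. \<zeta> \<notin> cball 0 1 \<longrightarrow> \<mu> \<zeta> = 0"
    and "z \<noteq> 0"
  shows "1 / (of_nat d * z ^ (d - 1)) * (cauchy_transform \<mu> (z ^ d) - cauchy_transform \<mu> 0)
         = cauchy_transform (pullback (\<lambda>w. w ^ d) \<mu>) z"
proof -
  have d2: "d \<ge> 2" by (rule assms(1))
  then have d0: "d > 0" by simp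
  have \<mu>m: "\<mu> \<in> borel_measurable lebesgue" by (rule assms(2))
  obtain B where B: "AE \<zeta> in lebesgue. norm (\<mu> \<zeta>) \<le> B" using assms(3) by blast
  have supp: "AE \<zeta> in lebesgue. \<zeta> \<notin> cball 0 1 \<longrightarrow> \<mu> \<zeta> = 0" by (rule assms(4))
  have zne: "z \<noteq> 0" by (rule assms(5))
  have AE0: "AE w in lebesgue. w \<noteq> c" for c :: complex
    by (rule AE_completion) (rule AE_lborel_singleton)

  have intI: "integrable lebesgue (\<lambda>w. \<mu> w / (a - w))" for a
  proof (rule Bochner_Integration.integrable_bound)
    show "integrable lebesgue (\<lambda>w. complex_of_real \<bar>B\<bar> * complex_of_real (indicator (cball 0 1) w / cmod (a - w)))"
      using inv_dist_integrable[of a] by (intro integrable_mult_right) (simp add: absint_UNIV_iff)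
    have "(\<lambda>w. a - w) \<in> borel_measurable lebesgue"
      by (rule borel_leb, rule borel_measurable_continuous_onI) (intro continuous_intros)
    then show "(\<lambda>w. \<mu> w / (a - w)) \<in> borel_measurable lebesgue"
      by (intro borel_measurable_divide \<mu>m)
    show "AE w in lebesgue. norm (\<mu> w / (a - w)) \<le>
        norm (complex_of_real \<bar>B\<bar> * complex_of_real (indicator (cball 0 1) w / cmod (a - w)))"
      using B supp
    proof eventually_elim
      case (elim w)
      show ?case
      proof (cases "w \<in> cball 0 1")
        case True
        have "norm (\<mu> w / (a - w)) = norm (\<mu> w) / cmod (a - w)" by (simp add: norm_divide)
        also have "\<dots> \<le> \<bar>B\<bar> / cmod (a - w)" using elim(1) by (intro divide_right_mono) auto
        also have "\<dots> = norm (complex_of_real \<bar>B\<bar> * complex_of_real (indicator (cball 0 1) w / cmod (a - w)))"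
          using True by (simp add: norm_mult norm_divide)
        finally show ?thesis .
      next
        case False then show ?thesis using elim(2) by simp
      qed
    qed
  qed

  have H1TT: "(\<lambda>u. (cmod (exp u))^2 *\<^sub>R PB d z nu1 (exp u)) absolutely_integrable_on TT"
    using cov_exp[where F="PB d z nu1" and b="integral (-{0}) (PB d z nu1)"] PB_nu1_int[OF d0] by blast
  have fk1: "fk d z nu1 k absolutely_integrable_on (-{0})" if "k < d" for k
  proof -
    have "(\<lambda>u. (cmod (exp u))^2 *\<^sub>R PB d z nu1 (exp u)) absolutely_integrable_on Tk d k"
      by (rule set_integrable_subset[OF H1TT Tk_sets Tk_sub[OF that]])
    then show ?thesis
      using Hk_iff[OF d0, where \<nu>=nu1 and k=k and z=z and
          b="integral (Tk d k) (\<lambda>u. (cmod (exp u))^2 *\<^sub>R PB d z nu1 (exp u))"] by blast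
  qed
  have fkmu: "integrable lebesgue (fk d z \<mu> k)" if "k < d" for k
  proof -
    have i1: "integrable lebesgue (fk d z nu1 k)"
      using fk1[OF that] minus0(1) absint_UNIV_iff by blast
    have m1: "fk d z nu1 k \<in> borel_measurable lebesgue" using i1 by (rule borel_measurable_integrable)
    define g0 where "g0 w = \<mu> w * fk d z nu1 k w" for w
    have mg: "g0 \<in> borel_measurable lebesgue" unfolding g0_def by (intro borel_measurable_times \<mu>m m1)
    have ig: "integrable lebesgue g0"
    proof (rule Bochner_Integration.integrable_bound)
      show "integrable lebesgue (\<lambda>w. complex_of_real \<bar>B\<bar> * fk d z nu1 k w)" using i1 by (rule integrable_mult_right)
      show "g0 \<in> borel_measurable lebesgue" by (rule mg)
      show "AE w in lebesgue. norm (g0 w) \<le> norm (complex_of_real \<bar>B\<bar> * fk d z nu1 k w)"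
        using B
      proof eventually_elim
        case (elim w)
        then show ?case by (auto simp: g0_def norm_mult intro!: mult_right_mono)
      qed
    qed
    have ae: "AE w in lebesgue. g0 w = fk d z \<mu> k w"
      using supp AE0[of 0]
    proof eventually_elim
      case (elim w)
      then show ?case using fk_eq[OF d0, of w z nu1 k] fk_eq[OF d0, of w z \<mu> k]
        by (cases "w \<in> cball 0 1") (auto simp: g0_def nu1_def)
    qed
    have "fk d z \<mu> k \<in> borel_measurable lebesgue" by (rule borel_measurable_AE[OF mg ae])
    then show ?thesis using integrable_cong_AE_imp[OF ig _ ae] by blast
  qed
  have fkmu': "fk d z \<mu> k absolutely_integrable_on (-{0})" if "k < d" for k
    using fkmu[OF that] minus0(1) absint_UNIV_iff by blast

  define Hm where "Hm u = (cmod (exp u))^2 *\<^sub>R PB d z \<mu> (exp u)" for u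
  have Hk: "Hm absolutely_integrable_on Tk d k \<and> integral (Tk d k) Hm = integral (-{0}) (fk d z \<mu> k)"
    if "k < d" for k
    using Hk_iff[OF d0, where \<nu>=\<mu> and k=k and z=z and b="integral (-{0}) (fk d z \<mu> k)"] fkmu'[OF that]
    unfolding Hm_def[abs_def] by blast
  have HT: "Hm absolutely_integrable_on TT \<and> integral TT Hm = (\<Sum>k<d. integral (Tk d k) Hm)"
    using split_TT[OF d0] Hk by blast
  have P: "PB d z \<mu> absolutely_integrable_on (-{0}) \<and> integral (-{0}) (PB d z \<mu>) = integral TT Hm"
    using cov_exp[where F="PB d z \<mu>" and b="integral TT Hm"] HT unfolding Hm_def[abs_def] by blast
  have intP: "integrable lebesgue (PB d z \<mu>)"
    using P minus0(1) absint_UNIV_iff by blast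
  have valP: "integral UNIV (PB d z \<mu>) = (\<Sum>k<d. integral (-{0}) (fk d z \<mu> k))"
  proof -
    have "integral UNIV (PB d z \<mu>) = integral (-{0}) (PB d z \<mu>)" by (simp add: minus0(2))
    also have "\<dots> = (\<Sum>k<d. integral (Tk d k) Hm)" using P HT by simp
    also have "\<dots> = (\<Sum>k<d. integral (-{0}) (fk d z \<mu> k))" using Hk by simp
    finally show ?thesis .
  qed
  define c where "c = 1 / (of_nat d * z^(d-1))"
  define I where "I a = integral UNIV (\<lambda>w. \<mu> w / (a - w))" for a
  have intIon: "(\<lambda>w. \<mu> w / (a - w)) integrable_on UNIV" for a
    using intI[of a] by (rule integrable_on_lebesgue)
  have "(\<Sum>k<d. integral (-{0}) (fk d z \<mu> k)) = integral (-{0}) (\<lambda>w. \<Sum>k<d. fk d z \<mu> k w)"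
    by (rule integral_sum[symmetric]) (use fkmu' set_lebesgue_integral_eq_integral(1) in auto)
  also have "\<dots> = integral (-{0}) (\<lambda>w. c * (\<mu> w / (z^d - w) - \<mu> w / (0 - w)))"
  proof (rule integral_spike[of "{z^d}"])
    show "negligible {z^d}" by simp
    fix w assume "w \<in> -{0} - {z^d}"
    then have w: "w \<noteq> 0" "z^d \<noteq> w" by auto
    show "c * (\<mu> w / (z^d - w) - \<mu> w / (0 - w)) = (\<Sum>k<d. fk d z \<mu> k w)"
      using fk_sum[OF d2 w(1) zne w(2)] by (simp add: c_def)
  qed
  also have "\<dots> = integral UNIV (\<lambda>w. c * (\<mu> w / (z^d - w) - \<mu> w / (0 - w)))" by (rule minus0(2))
  also have "\<dots> = c * integral UNIV (\<lambda>w. \<mu> w / (z^d - w) - \<mu> w / (0 - w))"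
    by (rule integral_mult_right)
  also have "integral UNIV (\<lambda>w. \<mu> w / (z^d - w) - \<mu> w / (0 - w)) = I (z^d) - I 0"
    unfolding I_def by (rule integral_diff[OF intIon intIon])
  finally have main: "integral UNIV (PB d z \<mu>) = c * (I (z^d) - I 0)" using valP by simp
  have ct: "cauchy_transform \<mu> a = 1 / of_real pi * I a" for a
    unfolding cauchy_transform_def I_def using integral_lebesgue[OF intI[of a]] by simp
  have eqPB: "(\<lambda>\<zeta>. pullback (\<lambda>w. w ^ d) \<mu> \<zeta> / (z - \<zeta>)) = PB d z \<mu>"
    by (rule ext) (simp add: PB_def)
  have ctP: "cauchy_transform (pullback (\<lambda>w. w ^ d) \<mu>) z = 1 / of_real pi * integral UNIV (PB d z \<mu>)"
    unfolding cauchy_transform_def eqPB using integral_lebesgue[OF intP] by simp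
  have nz: "z^(d-1) \<noteq> 0" "complex_of_nat d \<noteq> 0" "complex_of_real pi \<noteq> 0" using zne d0 by auto
  show ?thesis
    unfolding ctP main ct c_def using nz by (simp add: field_simps)
qed

end
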